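(* For $s,s'\in\mathscr S_+$: (1) $\lfloor s\rfloor\preceq s\preceq\lceil s\rceil$; (2) if $s\preceq s'$, then $\lfloor s\rfloor\preceq\lfloor s'\rfloor$, $\lceil s\rceil\preceq\lceil s'\rceil$, and $\mathfrak d(s)\le\mathfrak d(s')$.
   Context: $\omega=\{0,1,\dots\}$, $[m]=\{1,\dots,m\}$. A finite sign sequence is $s\in\{-,0,+\}^\omega$ with finitely many nonzero entries; $\mathscr S$ their set; $\operatorname{supp}(s)=\{i:s_i\ne0\}$; $\mathscr S_+=\mathscr S\cap\{0,+\}^\omega$. $\mathrm{SC}(t)$ = number of pairs $i<j$ with $\{t_i,t_j\}=\{-,+\}$ and $t_k=0$ for $i<k<j$. $\mathfrak d(s)=\max\{\mathrm{SC}(t):t\in\mathscr S,\ t_i\in\{-,0,s_i\}\ \forall i\}$ for $s\in\mathscr S_+$. $\mathscr S_+^\circ=\{s\in\mathscr S_+:\mathfrak d(s)=\#\operatorname{supp}(s)\}$. Interval decomposition of $s\in\mathscr S_+$: $\operatorname{supp}(s)=X_0\amalg\cdots\amalg X_k$ into intervals with $0\in X_0$ if $0\in\operatorname{supp}(s)$ else $X_0=\emptyset$, $X_i\neq\emptyset$ for $i\in[k]$, $\min X_i-\max X_{i-1}\ge2$ ($\max\emptyset=-\infty$). $\lfloor X_i\rfloor=\{\min X_i-1\}\amalg X_i$ if $\#X_i$ odd, else $X_i$; $\lceil X_i\rceil=X_i\amalg\{\max X_i+1\}$ if $\#X_i$ odd, else $X_i$; $\operatorname{supp}(\lfloor s\rfloor)=X_0\amalg\lfloor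 X_1\rfloor\amalg\cdots\amalg\lfloor X_k\rfloor$, $\operatorname{supp}(\lceil s\rceil)=X_0\amalg\lceil X_1\rceil\amalg\cdots\amalg\lceil X_k\rceil$. On $\mathscr S_+^\circ$: with $\operatorname{supp}(s)=\{d_1>\cdots>d_m\}$, $\operatorname{supp}(s')=\{d'_1>\cdots>d'_{m'}\}$, $s\preceq_0 s'$ iff $m\le m'$ and $d_i\le d'_i$ for $i\in[m]$. On $\mathscr S_+$: $s\preceq s'$ iff $s=s'$, or $s\ne s'$ and $\lceil s\rceil\preceq_0\lfloor s'\rfloor$ (a partial order); $s\prec s'$ means $s\preceq s'$ and $s\ne s'$. *)

theory Defs
  imports Main
begin

datatype sign = Neg | Zero | Pos

type_synonym sseq = "nat \<Rightarrow> sign"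

definition supp :: "sseq \<Rightarrow> nat set" where
  "supp s = {i. s i \<noteq> Zero}"

definition SS :: "sseq set" where
  "SS = {t. finite (supp t)}"

definition SSplus :: "sseq set" where
  "SSplus = {s \<in> SS. \<forall>i. s i \<in> {Zero, Pos}}"

definition SC :: "sseq \<Rightarrow> nat" where
  "SC t = card {(i, j). i < j \<and> {t i, t j} = {Neg, Pos} \<and> (\<forall>k. i < k \<and> k < j \<longrightarrow> t k = Zero)}"

definition dd :: "sseq \<Rightarrow> nat" where
  "dd s = Max {SC t | t. t \<in> SS \<and> (\<forall>i. t i \<in> {Neg, Zero, s i})}"

definition SSplus_circ :: "sseq set" where
  "SSplus_circ = {s \<in> SSplus. dd s = card (supp s)}"

definition runs :: "nat set \<Rightarrow> nat set set" where
  "runs A = {X. \<exists>a b. a \<le> b \<and> X = {a..b} \<and> X \<subseteq> A \<and> (a = 0 \<or> a - 1 \<notin> A) \<and> b + 1 \<notin> A}"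

definition floor_supp :: "nat set \<Rightarrow> nat set" where
  "floor_supp A = A \<union> {Min X - 1 | X. X \<in> runs A \<and> 0 \<notin> X \<and> odd (card X)}"

definition ceil_supp :: "nat set \<Rightarrow> nat set" where
  "ceil_supp A = A \<union> {Max X + 1 | X. X \<in> runs A \<and> 0 \<notin> X \<and> odd (card X)}"

definition of_supp :: "nat set \<Rightarrow> sseq" where
  "of_supp A = (\<lambda>i. if i \<in> A then Pos else Zero)"

definition sfloor :: "sseq \<Rightarrow> sseq" where
  "sfloor s = of_supp (floor_supp (supp s))"

definition sceil :: "sseq \<Rightarrow> sseq" where
  "sceil s = of_supp (ceil_supp (supp s))"

definition dsupp :: "sseq \<Rightarrow> nat list" where
  "dsupp s = rev (sorted_list_of_set (supp s))"

definition prec0 :: "sseq \<Rightarrow> sseq \<Rightarrow> bool" where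
  "prec0 s s' \<longleftrightarrow> s \<in> SSplus_circ \<and> s' \<in> SSplus_circ \<and>
     length (dsupp s) \<le> length (dsupp s') \<and>
     (\<forall>i < length (dsupp s). dsupp s ! i \<le> dsupp s' ! i)"

definition prec :: "sseq \<Rightarrow> sseq \<Rightarrow> bool" where
  "prec s s' \<longleftrightarrow> s \<in> SSplus \<and> s' \<in> SSplus \<and> (s = s' \<or> (s \<noteq> s' \<and> prec0 (sceil s) (sfloor s')))"

end

theory Submission
  imports Defs
begin


definition RL :: "nat set \<Rightarrow> nat \<Rightarrow> nat" where
  "RL X q = (LEAST k. q + k \<notin> X)"

lemma RL_ex: "finite X \<Longrightarrow> \<exists>k. q + k \<notin> (X::nat set)"
proof -
  assume "finite X"
  then obtain m where "\<forall>x\<in>X. x < m" by (auto simp: finite_nat_set_iff_bounded)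
  then have "q + m \<notin> X" by fastforce
  then show ?thesis by blast
qed

lemma RL_notin: "finite X \<Longrightarrow> q + RL X q \<notin> X"
  unfolding RL_def using RL_ex LeastI_ex by fast

lemma RL_in: "finite X \<Longrightarrow> k < RL X q \<Longrightarrow> q + k \<in> X"
  unfolding RL_def using not_less_Least by blast

lemma RL_eq: "(\<forall>k<n. q+k \<in> X) \<Longrightarrow> q+n \<notin> X \<Longrightarrow> RL X q = n"
  unfolding RL_def by (rule Least_equality) (auto simp: not_less[symmetric])

lemma RL_0: "q \<notin> X \<Longrightarrow> RL X q = 0"
  using RL_eq[of 0 q X] by simp

lemma RL_Suc: "finite X \<Longrightarrow> q \<in> X \<Longrightarrow> RL X q = Suc (RL X (Suc q))"
proof -
  assume f: "finite X" and q: "q \<in> X"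
  show ?thesis
  proof (rule RL_eq)
    show "\<forall>k<Suc (RL X (Suc q)). q + k \<in> X"
    proof (intro allI impI)
      fix k assume "k < Suc (RL X (Suc q))"
      then show "q + k \<in> X" using q RL_in[OF f, of "k - 1" "Suc q"]
        by (cases k) auto
    qed
    show "q + Suc (RL X (Suc q)) \<notin> X" using RL_notin[OF f, of "Suc q"] by simp
  qed
qed

lemma RL_pos: "finite X \<Longrightarrow> q \<in> X \<Longrightarrow> 0 < RL X q"
  using RL_Suc by simp

lemma RL_add: "finite X \<Longrightarrow> \<forall>j<k. q+j \<in> X \<Longrightarrow> RL X q = k + RL X (q+k)"
proof (induction k arbitrary: q)
  case 0 then show ?case by simp
next
  case (Suc k)
  have "q \<in> X" using Suc.prems(2) by (metis add_0_right zero_less_Suc)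
  then have "RL X q = Suc (RL X (Suc q))" using RL_Suc Suc.prems by blast
  moreover have "RL X (Suc q) = k + RL X (Suc q + k)"
  proof -
    have "\<forall>j<k. Suc q + j \<in> X"
    proof (intro allI impI)
      fix j assume "j < k"
      then have "Suc j < Suc k" by simp
      then have "q + Suc j \<in> X" using Suc.prems(2) by blast
      then show "Suc q + j \<in> X" by simp
    qed
    then show ?thesis using Suc.IH[of "Suc q"] Suc.prems(1) by simp
  qed
  ultimately show ?case by simp
qed

definition SR :: "nat set \<Rightarrow> nat set" where
  "SR X = {p \<in> X. 1 \<le> p \<and> p - 1 \<notin> X \<and> odd (RL X p)}"

definition fl :: "nat set \<Rightarrow> nat set" where
  "fl X = X \<union> (\<lambda>p. p - 1) ` SR X"

definition ce :: "nat set \<Rightarrow> nat set" where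
  "ce X = X \<union> (\<lambda>p. p + RL X p) ` SR X"

lemma runs_char:
  assumes f: "finite A"
  shows "(X \<in> runs A \<and> 0 \<notin> X \<and> odd (card X)) \<longleftrightarrow> (\<exists>p\<in>SR A. X = {p..p + RL A p - 1})"
proof
  assume h: "X \<in> runs A \<and> 0 \<notin> X \<and> odd (card X)"
  then obtain a b where ab: "a \<le> b" "X = {a..b}" "X \<subseteq> A" "a = 0 \<or> a - 1 \<notin> A" "b + 1 \<notin> A"
    unfolding runs_def by blast
  have a1: "1 \<le> a" using h ab by (cases a) auto
  have R: "RL A a = b - a + 1"
    by (rule RL_eq) (use ab in auto)
  have "a \<in> SR A" unfolding SR_def using ab a1 R h by auto
  moreover have "X = {a..a + RL A a - 1}" using R ab by auto
  ultimately show "\<exists>p\<in>SR A. X = {p..p + RL A p - 1}" by blast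
next
  assume "\<exists>p\<in>SR A. X = {p..p + RL A p - 1}"
  then obtain p where p: "p \<in> SR A" "X = {p..p + RL A p - 1}" by blast
  have pos: "0 < RL A p" using p RL_pos[OF f] unfolding SR_def by blast
  have sub: "X \<subseteq> A"
  proof
    fix x assume "x \<in> X"
    then have "x - p < RL A p" "x = p + (x - p)" using p pos by auto
    then show "x \<in> A" using RL_in[OF f] by metis
  qed
  have "X \<in> runs A" unfolding runs_def mem_Collect_eq
    apply (rule exI[of _ p], rule exI[of _ "p + RL A p - 1"])
    using p pos sub RL_notin[OF f, of p] unfolding SR_def by auto
  moreover have "0 \<notin> X" using p unfolding SR_def by auto
  moreover have "odd (card X)" using p pos unfolding SR_def by auto
  ultimately show "X \<in> runs A \<and> 0 \<notin> X \<and> odd (card X)" by blast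
qed

lemma floor_eq: assumes f: "finite A" shows "floor_supp A = fl A"
proof -
  have "{Min X - 1 | X. X \<in> runs A \<and> 0 \<notin> X \<and> odd (card X)} = (\<lambda>p. p - 1) ` SR A"
  proof -
    have "{Min X - 1 | X. X \<in> runs A \<and> 0 \<notin> X \<and> odd (card X)}
        = {Min X - 1 | X. \<exists>p\<in>SR A. X = {p..p + RL A p - 1}}"
      using runs_char[OF f] by blast
    also have "\<dots> = (\<lambda>p. p - 1) ` SR A"
    proof -
      have "\<And>p. p \<in> SR A \<Longrightarrow> Min {p..p + RL A p - 1} = p"
      proof -
        fix p assume "p \<in> SR A"
        then have "0 < RL A p" using RL_pos[OF f] unfolding SR_def by blast
        then show "Min {p..p + RL A p - 1} = p" by (intro Min_eqI) auto
      qed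
      then show ?thesis by force
    qed
    finally show ?thesis .
  qed
  then show ?thesis unfolding floor_supp_def fl_def by simp
qed

lemma ceil_eq: assumes f: "finite A" shows "ceil_supp A = ce A"
proof -
  have "{Max X + 1 | X. X \<in> runs A \<and> 0 \<notin> X \<and> odd (card X)} = (\<lambda>p. p + RL A p) ` SR A"
  proof -
    have "{Max X + 1 | X. X \<in> runs A \<and> 0 \<notin> X \<and> odd (card X)}
        = {Max X + 1 | X. \<exists>p\<in>SR A. X = {p..p + RL A p - 1}}"
      using runs_char[OF f] by blast
    also have "\<dots> = (\<lambda>p. p + RL A p) ` SR A"
    proof -
      have "\<And>p. p \<in> SR A \<Longrightarrow> Max {p..p + RL A p - 1} + 1 = p + RL A p"
      proof -
        fix p assume "p \<in> SR A"
        then have "0 < RL A p" using RL_pos[OF f] unfolding SR_def by blast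
        then show "Max {p..p + RL A p - 1} + 1 = p + RL A p" by (subst Max_eqI) auto
      qed
      then show ?thesis by force
    qed
    finally show ?thesis .
  qed
  then show ?thesis unfolding ceil_supp_def ce_def by simp
qed



lemma end_uniq:
  assumes f: "finite A" and p: "p \<in> A \<and> 1 \<le> p \<and> p - 1 \<notin> A" and q: "q \<in> A \<and> 1 \<le> q \<and> q - 1 \<notin> A"
    and e: "p + RL A p = q + RL A q"
  shows "p = q"
proof (rule ccontr)
  assume ne: "p \<noteq> q"
  have pp: "0 < RL A p" "0 < RL A q" using p q RL_pos[OF f] unfolding SR_def by auto
  { fix a b assume a: "a \<in> A \<and> 1 \<le> a \<and> a - 1 \<notin> A" and b: "b \<in> A \<and> 1 \<le> b \<and> b - 1 \<notin> A" and ab: "a < b"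
      and e2: "a + RL A a = b + RL A b" and pb: "0 < RL A b"
    have "b - 1 - a < RL A a" "a + (b - 1 - a) = b - 1" using ab e2 pb b unfolding SR_def by auto
    then have "b - 1 \<in> A" using RL_in[OF f] by metis
    then have False using b unfolding SR_def by auto }
  note * = this
  show False
  proof (cases "p < q")
    case True then show ?thesis using *[OF p q _ e] pp by auto
  next
    case False then have "q < p" using ne by auto
    then show ?thesis using *[OF q p _ e[symmetric]] pp by auto
  qed
qed

lemma SR_sub: "SR A \<subseteq> A" unfolding SR_def by auto

lemma finite_fl: "finite A \<Longrightarrow> finite (fl A)"
  unfolding fl_def using SR_sub finite_subset by blast
lemma finite_ce: "finite A \<Longrightarrow> finite (ce A)"
  unfolding ce_def using SR_sub finite_subset by blast

lemma fl_added: "x \<in> fl A \<Longrightarrow> x \<notin> A \<Longrightarrow> Suc x \<in> SR A"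
  unfolding fl_def SR_def by auto

lemma ce_added: "x \<in> ce A \<Longrightarrow> x \<notin> A \<Longrightarrow> \<exists>p\<in>SR A. x = p + RL A p"
  unfolding ce_def by auto

lemma fl_par:
  assumes f: "finite A"
  shows "q \<in> fl A \<Longrightarrow> (q \<in> A \<longrightarrow> (even (RL (fl A) q) \<longleftrightarrow> even (RL A q))) \<and> (q \<notin> A \<longrightarrow> even (RL (fl A) q))"
proof (induction "RL (fl A) q" arbitrary: q rule: less_induct)
  case less
  let ?B = "fl A"
  have fB: "finite ?B" using finite_fl[OF f] .
  have AB: "A \<subseteq> ?B" unfolding fl_def by auto
  have RB: "RL ?B q = Suc (RL ?B (Suc q))" using RL_Suc[OF fB less.prems] .
  show ?case
  proof (intro conjI impI)
    assume qA: "q \<in> A"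
    have RA: "RL A q = Suc (RL A (Suc q))" using RL_Suc[OF f qA] .
    show "even (RL ?B q) \<longleftrightarrow> even (RL A q)"
    proof (cases "Suc q \<in> A")
      case True
      then have "even (RL ?B (Suc q)) \<longleftrightarrow> even (RL A (Suc q))"
        using less.hyps[of "Suc q"] RB AB by auto
      then show ?thesis using RA RB by simp
    next
      case False
      then have RA1: "RL A q = 1" using RA RL_0 by simp
      show ?thesis
      proof (cases "Suc q \<in> ?B")
        case True
        then have "even (RL ?B (Suc q))" using less.hyps[of "Suc q"] RB False by auto
        then show ?thesis using RA1 RB by simp
      next
        case False
        then show ?thesis using RA1 RB RL_0 by simp
      qed
    qed
  next
    assume qA: "q \<notin> A"
    then have s: "Suc q \<in> SR A" using fl_added less.prems by blast
    then have sA: "Suc q \<in> A" and od: "odd (RL A (Suc q))" unfolding SR_def by auto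
    have "even (RL ?B (Suc q)) \<longleftrightarrow> even (RL A (Suc q))"
      using less.hyps[of "Suc q"] RB AB sA by auto
    then show "even (RL ?B q)" using od RB by simp
  qed
qed

lemma ce_par:
  assumes f: "finite A"
  shows "q \<in> A \<Longrightarrow> 1 \<le> q \<Longrightarrow> q - 1 \<notin> A \<Longrightarrow> even (RL (ce A) q)"
proof (induction "RL (ce A) q" arbitrary: q rule: less_induct)
  case less
  let ?C = "ce A"
  have fC: "finite ?C" using finite_ce[OF f] .
  have AC: "A \<subseteq> ?C" unfolding ce_def by auto
  define k where "k = RL A q"
  have kpos: "0 < k" unfolding k_def using RL_pos[OF f less.prems(1)] .
  have inA: "\<forall>j<k. q + j \<in> A" unfolding k_def using RL_in[OF f] by blast
  have e1: "q + k \<notin> A" unfolding k_def using RL_notin[OF f] .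
  have RC: "RL ?C q = k + RL ?C (q + k)" using RL_add[OF fC] inA AC by blast
  show ?case
  proof (cases "even k")
    case True
    have "q + k \<notin> ?C"
    proof
      assume "q + k \<in> ?C"
      then obtain p where p: "p \<in> SR A" "q + k = p + RL A p" using ce_added e1 by blast
      have "p = q" by (rule end_uniq[OF f]) (use p less.prems k_def in \<open>auto simp: SR_def\<close>)
      then show False using p True k_def unfolding SR_def by auto
    qed
    then show ?thesis using RC True RL_0 by simp
  next
    case False
    have qS: "q \<in> SR A" unfolding SR_def using less.prems False k_def by auto
    then have e1C: "q + k \<in> ?C" unfolding ce_def k_def by auto
    have RC1: "RL ?C (q + k) = Suc (RL ?C (Suc (q + k)))" using RL_Suc[OF fC e1C] .
    show ?thesis
    proof (cases "Suc (q + k) \<in> ?C")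
      case False
      then show ?thesis using RC RC1 RL_0 \<open>odd k\<close> by simp
    next
      case True
      have sA: "Suc (q + k) \<in> A"
      proof (rule ccontr)
        assume "Suc (q + k) \<notin> A"
        then obtain p where p: "p \<in> SR A" "Suc (q + k) = p + RL A p" using ce_added True by blast
        have "0 < RL A p" using p RL_pos[OF f] unfolding SR_def by auto
        then have "p + (RL A p - 1) \<in> A" using RL_in[OF f, of "RL A p - 1" p] by simp
        moreover have "p + (RL A p - 1) = q + k" using p(2) \<open>0 < RL A p\<close> by linarith
        ultimately show False using e1 by simp
      qed
      have "even (RL ?C (Suc (q + k)))"
        using less.hyps[of "Suc (q + k)"] sA e1 RC RC1 kpos by auto
      then show ?thesis using RC RC1 \<open>odd k\<close> by simp
    qed
  qed
qed



definition PP :: "nat set \<Rightarrow> bool" where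
  "PP X \<longleftrightarrow> (\<forall>q\<in>X. 1 \<le> q \<longrightarrow> q - 1 \<notin> X \<longrightarrow> even (RL X q))"

lemma PP_fl: assumes f: "finite A" shows "PP (fl A)"
  unfolding PP_def
proof (intro ballI impI)
  fix q assume q: "q \<in> fl A" "1 \<le> q" "q - 1 \<notin> fl A"
  show "even (RL (fl A) q)"
  proof (cases "q \<in> A")
    case False then show ?thesis using fl_par[OF f q(1)] by blast
  next
    case True
    have "q - 1 \<notin> A" using q(3) unfolding fl_def by auto
    moreover have "\<not> odd (RL A q)"
    proof
      assume "odd (RL A q)"
      then have "q \<in> SR A" using True q \<open>q - 1 \<notin> A\<close> unfolding SR_def by auto
      then show False using q(3) unfolding fl_def by auto
    qed
    ultimately show ?thesis using fl_par[OF f q(1)] True by blast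
  qed
qed

lemma PP_ce: assumes f: "finite A" shows "PP (ce A)"
  unfolding PP_def
proof (intro ballI impI)
  fix q assume q: "q \<in> ce A" "1 \<le> q" "q - 1 \<notin> ce A"
  have qA: "q \<in> A"
  proof (rule ccontr)
    assume "q \<notin> A"
    then obtain p where p: "p \<in> SR A" "q = p + RL A p" using ce_added q(1) by blast
    have "0 < RL A p" using p RL_pos[OF f] unfolding SR_def by auto
    then have "p + (RL A p - 1) \<in> A" using RL_in[OF f, of "RL A p - 1" p] by simp
    moreover have "p + (RL A p - 1) = q - 1" using p(2) \<open>0 < RL A p\<close> by linarith
    ultimately show False using q(3) unfolding ce_def by auto
  qed
  have "q - 1 \<notin> A" using q(3) unfolding ce_def by auto
  then show "even (RL (ce A) q)" using ce_par[OF f qA q(2)] by blast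
qed

lemma PP_SR: "PP X \<Longrightarrow> SR X = {}"
  unfolding PP_def SR_def by auto

lemma PP_fl_id: "PP X \<Longrightarrow> fl X = X"
  using PP_SR unfolding fl_def by auto

lemma PP_ce_id: "PP X \<Longrightarrow> ce X = X"
  using PP_SR unfolding ce_def by auto

lemma card_fl: assumes f: "finite A" shows "card (fl A) = card A + card (SR A)"
proof -
  have fS: "finite (SR A)" using SR_sub f finite_subset by blast
  have inj: "inj_on (\<lambda>p. p - 1) (SR A)" unfolding inj_on_def SR_def by auto
  have disj: "A \<inter> (\<lambda>p. p - 1) ` SR A = {}" unfolding SR_def by auto
  have "card (fl A) = card A + card ((\<lambda>p. p - 1) ` SR A)"
    unfolding fl_def using card_Un_disjoint[OF f finite_imageI[OF fS] disj] .
  then show ?thesis using card_image[OF inj] by simp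
qed

lemma card_ce: assumes f: "finite A" shows "card (ce A) = card A + card (SR A)"
proof -
  have fS: "finite (SR A)" using SR_sub f finite_subset by blast
  have inj: "inj_on (\<lambda>p. p + RL A p) (SR A)"
    unfolding inj_on_def using end_uniq[OF f] unfolding SR_def by blast
  have disj: "A \<inter> (\<lambda>p. p + RL A p) ` SR A = {}" using RL_notin[OF f] by auto
  have "card (ce A) = card A + card ((\<lambda>p. p + RL A p) ` SR A)"
    unfolding ce_def using card_Un_disjoint[OF f finite_imageI[OF fS] disj] .
  then show ?thesis using card_image[OF inj] by simp
qed

definition cnt :: "nat set \<Rightarrow> nat \<Rightarrow> nat" where
  "cnt X v = card {x\<in>X. v \<le> x}"

lemma cnt_fl_ce: assumes f: "finite A" shows "cnt (fl A) v \<le> cnt (ce A) v"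
proof -
  define g where "g x = (if x \<in> A then x else Suc x + RL A (Suc x))" for x
  have inj: "inj_on g (fl A)"
  proof (rule inj_onI)
    fix x y assume x: "x \<in> fl A" and y: "y \<in> fl A" and e: "g x = g y"
    show "x = y"
    proof (cases "x \<in> A"; cases "y \<in> A")
      assume "x \<in> A" "y \<in> A" then show ?thesis using e g_def by simp
    next
      assume xa: "x \<in> A" "y \<notin> A"
      then have "g y \<notin> A" unfolding g_def using RL_notin[OF f, of "Suc y"] by simp
      then show ?thesis using xa e g_def by simp
    next
      assume ya: "x \<notin> A" "y \<in> A"
      then have "g x \<notin> A" unfolding g_def using RL_notin[OF f, of "Suc x"] by simp
      then show ?thesis using ya e g_def by simp
    next
      assume n: "x \<notin> A" "y \<notin> A"
      then have "Suc x \<in> SR A" "Suc y \<in> SR A" using fl_added x y by auto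
      then have "Suc x = Suc y" using end_uniq[OF f, of "Suc x" "Suc y"] e n
        unfolding g_def SR_def by auto
      then show ?thesis by simp
    qed
  qed
  have img: "g ` {x\<in>fl A. v \<le> x} \<subseteq> {y\<in>ce A. v \<le> y}"
  proof
    fix y assume "y \<in> g ` {x\<in>fl A. v \<le> x}"
    then obtain x where x: "x \<in> fl A" "v \<le> x" "y = g x" by blast
    show "y \<in> {y\<in>ce A. v \<le> y}"
    proof (cases "x \<in> A")
      case True then show ?thesis using x g_def unfolding ce_def by auto
    next
      case False
      then have "Suc x \<in> SR A" using fl_added x by auto
      then show ?thesis using x False g_def unfolding ce_def by force
    qed
  qed
  have "card {x\<in>fl A. v \<le> x} \<le> card {y\<in>ce A. v \<le> y}"
    by (rule card_inj_on_le[OF inj_on_subset[OF inj] img]) (use finite_ce[OF f] in auto)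
  then show ?thesis unfolding cnt_def .
qed

lemma cnt_mono: "finite Y \<Longrightarrow> X \<subseteq> Y \<Longrightarrow> cnt X v \<le> cnt Y v"
  unfolding cnt_def by (rule card_mono) auto

lemma fl_L1: assumes f: "finite A" shows "q \<in> fl A \<Longrightarrow> odd (RL (fl A) q) \<Longrightarrow> q \<in> A"
  using fl_par[OF f] by blast



definition Ch :: "sseq \<Rightarrow> (nat \<times> nat) set" where
  "Ch t = {(i, j). i < j \<and> {t i, t j} = {Neg, Pos} \<and> (\<forall>k. i < k \<and> k < j \<longrightarrow> t k = Zero)}"

lemma SC_Ch: "SC t = card (Ch t)" unfolding SC_def Ch_def ..

lemma pair_NP: "{a, b} = {Neg, Pos} \<longleftrightarrow> (a = Neg \<and> b = Pos) \<or> (a = Pos \<and> b = Neg)"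
  by (cases a; cases b) (auto simp: doubleton_eq_iff)

lemma Ch_iff: "(i, j) \<in> Ch t \<longleftrightarrow> i < j \<and> ((t i = Neg \<and> t j = Pos) \<or> (t i = Pos \<and> t j = Neg)) \<and> (\<forall>k. i < k \<and> k < j \<longrightarrow> t k = Zero)"
  unfolding Ch_def using pair_NP by auto

lemma Ch_uniq_r: "(i, j) \<in> Ch t \<Longrightarrow> (i, j') \<in> Ch t \<Longrightarrow> j = j'"
  unfolding Ch_iff by (metis linorder_neqE_nat sign.distinct)

lemma Ch_uniq_l: "(i, j) \<in> Ch t \<Longrightarrow> (i', j) \<in> Ch t \<Longrightarrow> i = i'"
  unfolding Ch_iff by (metis linorder_neqE_nat sign.distinct)

lemma SC_upper:
  assumes fB: "finite B" and PB: "PP B" and pos: "\<forall>i. t i = Pos \<longrightarrow> i \<in> B"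
  shows "SC t \<le> card B"
proof -
  define f where "f = (\<lambda>(i::nat, j::nat). if t i = Pos then (if even (RL B i) then Suc i else i)
                         else (if even (RL B j) then j else j - 1))"
  have RS: "\<And>x. x \<in> B \<Longrightarrow> RL B x = Suc (RL B (Suc x))" using RL_Suc[OF fB] by blast
  have Sin: "\<And>x. x \<in> B \<Longrightarrow> even (RL B x) \<Longrightarrow> Suc x \<in> B"
  proof -
    fix x assume a: "x \<in> B" "even (RL B x)"
    have r: "RL B x = Suc (RL B (Suc x))" using RS[OF a(1)] .
    then have "RL B (Suc x) \<noteq> 0" using a(2) by (metis even_Suc odd_one One_nat_def)
    then have "1 < RL B x" using r by simp
    then show "Suc x \<in> B" using RL_in[OF fB, of 1 x] by simp
  qed
  have Pin: "\<And>x. x \<in> B \<Longrightarrow> odd (RL B x) \<Longrightarrow> 1 \<le> x \<Longrightarrow> x - 1 \<in> B"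
    using PB unfolding PP_def by blast
  have img: "f ` Ch t \<subseteq> B"
  proof
    fix y assume "y \<in> f ` Ch t"
    then obtain i j where c: "(i, j) \<in> Ch t" "y = f (i, j)" by auto
    then have c2: "i < j" "(t i = Neg \<and> t j = Pos) \<or> (t i = Pos \<and> t j = Neg)" unfolding Ch_iff by auto
    show "y \<in> B"
    proof (cases "t i = Pos")
      case True then show ?thesis using c pos Sin unfolding f_def by auto
    next
      case False
      then have "t j = Pos" using c2 by auto
      then have "j \<in> B" using pos by auto
      then show ?thesis using c c2 False Pin[of j] unfolding f_def by auto
    qed
  qed
  have inj: "inj_on f (Ch t)"
  proof (rule inj_onI)
    fix c c' assume c: "c \<in> Ch t" and c': "c' \<in> Ch t" and e: "f c = f c'"
    obtain i j where ij: "c = (i, j)" by (cases c)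
    obtain i' j' where ij': "c' = (i', j')" by (cases c')
    note C = c[unfolded ij Ch_iff] c'[unfolded ij' Ch_iff]
    have ee: "f (i, j) = f (i', j')" using e ij ij' by simp
    { fix a b a' b' assume A: "(a, b) \<in> Ch t" "(a', b') \<in> Ch t" "t a = Pos" "t a' = Neg"
        and E: "f (a, b) = f (a', b')"
      have False
      proof -
        have A1: "a < b" "t b = Neg" "\<forall>k. a < k \<and> k < b \<longrightarrow> t k = Zero" using A(1,3) unfolding Ch_iff by auto
        have A2: "a' < b'" "t b' = Pos" using A(2,4) unfolding Ch_iff by auto
        have aB: "a \<in> B" "b' \<in> B" using pos A(3) A2(2) by auto
        show False
        proof (cases "even (RL B a)"; cases "even (RL B b')")
          assume p: "even (RL B a)" "even (RL B b')"
          then have "Suc a = b'" using E A(3,4) unfolding f_def by simp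
          then show False using RS[OF aB(1)] p by simp
        next
          assume p: "even (RL B a)" "odd (RL B b')"
          then have s: "Suc a = b' - 1" using E A(3,4) unfolding f_def by simp
          then have b'eq: "b' = Suc (Suc a)" using A2 by linarith
          have "b = Suc a"
          proof (rule ccontr)
            assume "b \<noteq> Suc a"
            then have "Suc a < b" using A1 by simp
            then have "b = Suc (Suc a) \<or> Suc (Suc a) < b" by linarith
            then show False using A1 A2 b'eq by auto
          qed
          have "Suc a \<in> B" using Sin[OF aB(1) p(1)] .
          then have "RL B (Suc a) = Suc (RL B b')" using RS b'eq by simp
          moreover have "RL B a = Suc (RL B (Suc a))" using RS aB by simp
          ultimately show False using p by simp
        next
          assume p: "odd (RL B a)" "even (RL B b')"
          then have "a = b'" using E A(3,4) unfolding f_def by simp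
          then show False using p by simp
        next
          assume p: "odd (RL B a)" "odd (RL B b')"
          then have "a = b' - 1" using E A(3,4) unfolding f_def by simp
          then have "b' = Suc a" using A2 by linarith
          then show False using RS[OF aB(1)] p by simp
        qed
      qed }
    note mixed = this
    show "c = c'"
    proof (cases "t i = Pos"; cases "t i' = Pos")
      assume p: "t i = Pos" "t i' = Pos"
      have "i = i'"
      proof (rule ccontr)
        assume ne: "i \<noteq> i'"
        have iB: "i \<in> B" "i' \<in> B" using pos p by auto
        have tj: "t j = Neg" "t j' = Neg" using C p by auto
        { fix a b a' assume A: "(a, b) \<in> Ch t" "t a = Pos" "t a' = Pos" "a' = Suc a"
          then have "a < b" "t b = Neg" "\<forall>k. a < k \<and> k < b \<longrightarrow> t k = Zero" unfolding Ch_iff by auto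
          then have False using A(3,4) by (cases "b = Suc a") auto }
        note adj = this
        show False
        proof (cases "even (RL B i)"; cases "even (RL B i')")
          assume "even (RL B i)" "even (RL B i')"
          then show False using ee p ne unfolding f_def by simp
        next
          assume "even (RL B i)" "odd (RL B i')"
          then have "i' = Suc i" using ee p unfolding f_def by simp
          then show False using adj[OF c[unfolded ij] p] by blast
        next
          assume "odd (RL B i)" "even (RL B i')"
          then have "i = Suc i'" using ee p unfolding f_def by simp
          then show False using adj[OF c'[unfolded ij'] p(2) p(1)] by blast
        next
          assume "odd (RL B i)" "odd (RL B i')"
          then show False using ee p ne unfolding f_def by simp
        qed
      qed
      then show ?thesis using Ch_uniq_r c c' ij ij' by blast
    next
      assume p: "t i = Pos" "t i' \<noteq> Pos"
      then have "t i' = Neg" using C by auto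
      then show ?thesis using mixed[OF c[unfolded ij] c'[unfolded ij'] p(1)] ee by blast
    next
      assume p: "t i \<noteq> Pos" "t i' = Pos"
      then have "t i = Neg" using C by auto
      then show ?thesis using mixed[OF c'[unfolded ij'] c[unfolded ij] p(2)] ee by simp
    next
      assume p: "t i \<noteq> Pos" "t i' \<noteq> Pos"
      then have n: "t i = Neg" "t i' = Neg" "t j = Pos" "t j' = Pos" using C by auto
      have "j = j'"
      proof (rule ccontr)
        assume ne: "j \<noteq> j'"
        have jB: "j \<in> B" "j' \<in> B" using pos n by auto
        { fix a b b' assume A: "(a, b) \<in> Ch t" "t a = Neg" "t b = Pos" "t b' = Pos" "b = Suc b'"
          then have "a < b" "\<forall>k. a < k \<and> k < b \<longrightarrow> t k = Zero" unfolding Ch_iff by auto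
          then have False using A by (cases "a = b'") auto }
        note adj = this
        show False
        proof (cases "even (RL B j)"; cases "even (RL B j')")
          assume "even (RL B j)" "even (RL B j')"
          then show False using ee p ne unfolding f_def by simp
        next
          assume "even (RL B j)" "odd (RL B j')"
          then have "j = j' - 1" using ee p unfolding f_def by simp
          then have "j' = Suc j" using C by linarith
          then show False using adj[OF c'[unfolded ij'] n(2) n(4) n(3)] by blast
        next
          assume "odd (RL B j)" "even (RL B j')"
          then have "j - 1 = j'" using ee p unfolding f_def by simp
          then have "j = Suc j'" using C by linarith
          then show False using adj[OF c[unfolded ij] n(1) n(3) n(4)] by blast
        next
          assume "odd (RL B j)" "odd (RL B j')"
          then have "j - 1 = j' - 1" using ee p unfolding f_def by simp
          then show False using C ne by linarith
        qed
      qed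
      then show ?thesis using Ch_uniq_l c c' ij ij' by blast
    qed
  qed
  have "card (Ch t) \<le> card B" by (rule card_inj_on_le[OF inj img fB])
  then show ?thesis using SC_Ch by simp
qed


lemma SC_lower:
  assumes fB: "finite B"
  shows "\<exists>t. t \<in> SS \<and> (\<forall>i. t i = Pos \<longrightarrow> i \<in> B \<and> odd (RL B i)) \<and> card B \<le> SC t"
proof -
  obtain M where M: "\<forall>x\<in>B. x \<le> M" using fB by (auto simp: finite_nat_set_iff_bounded_le)
  define t where "t q = (if q \<in> B \<and> odd (RL B q) then Pos else if q \<le> Suc M then Neg else Zero)" for q
  have RS: "\<And>x. x \<in> B \<Longrightarrow> RL B x = Suc (RL B (Suc x))" using RL_Suc[OF fB] by blast
  have nz: "\<And>q. t q \<noteq> Zero \<Longrightarrow> q \<le> Suc M" unfolding t_def using M by (auto split: if_splits)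
  have supp: "supp t \<subseteq> {..Suc M}" unfolding supp_def using nz by auto
  then have "t \<in> SS" unfolding SS_def using finite_subset[of "supp t" "{..Suc M}"] by simp
  moreover have "\<forall>i. t i = Pos \<longrightarrow> i \<in> B \<and> odd (RL B i)" unfolding t_def by auto
  moreover have "card B \<le> SC t"
  proof -
    have fC: "finite (Ch t)"
    proof (rule finite_subset)
      show "Ch t \<subseteq> {..Suc M} \<times> {..Suc M}"
      proof
        fix c assume "c \<in> Ch t"
        moreover obtain i j where "c = (i, j)" by (cases c)
        ultimately have "t i \<noteq> Zero" "t j \<noteq> Zero" by (auto simp: Ch_iff)
        then show "c \<in> {..Suc M} \<times> {..Suc M}" using nz \<open>c = (i, j)\<close> by auto
      qed
    qed auto
    have inj: "inj_on (\<lambda>q. (q, Suc q)) B" by (auto simp: inj_on_def)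
    have img: "(\<lambda>q. (q, Suc q)) ` B \<subseteq> Ch t"
    proof
      fix y assume "y \<in> (\<lambda>q. (q, Suc q)) ` B"
      then obtain q where q: "q \<in> B" "y = (q, Suc q)" by auto
      have r: "RL B q = Suc (RL B (Suc q))" using RS q(1) .
      have qM: "q \<le> M" using M q by auto
      show "y \<in> Ch t"
      proof (cases "odd (RL B q)")
        case True
        then have "t q = Pos" using q unfolding t_def by simp
        moreover have "t (Suc q) = Neg"
        proof (cases "Suc q \<in> B")
          case True then have "even (RL B (Suc q))" using r \<open>odd (RL B q)\<close> by simp
          then show ?thesis using qM True unfolding t_def by auto
        next
          case False then show ?thesis using qM unfolding t_def by auto
        qed
        ultimately show ?thesis using q by (auto simp: Ch_iff)
      next
        case False
        then have "t q = Neg" using q qM unfolding t_def by simp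
        have "RL B (Suc q) \<noteq> 0"
        proof
          assume "RL B (Suc q) = 0"
          then have "RL B q = 1" using r by simp
          then show False using False by simp
        qed
        then have "Suc q \<in> B" using RL_0[of "Suc q" B] by auto
        moreover have "odd (RL B (Suc q))" using r False by simp
        ultimately have "t (Suc q) = Pos" unfolding t_def by simp
        then show ?thesis using q \<open>t q = Neg\<close> by (auto simp: Ch_iff)
      qed
    qed
    show ?thesis using card_inj_on_le[OF inj img fC] SC_Ch by simp
  qed
  ultimately show ?thesis by blast
qed



lemma SSplus_of_supp: "s \<in> SSplus \<Longrightarrow> s = of_supp (supp s)"
  unfolding SSplus_def of_supp_def supp_def by (rule ext) auto

lemma supp_of_supp: "supp (of_supp X) = X"
  unfolding supp_def of_supp_def by auto

lemma of_supp_SSplus: "finite X \<Longrightarrow> of_supp X \<in> SSplus"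
  using supp_of_supp[of X] unfolding SSplus_def SS_def by (auto simp: of_supp_def)

lemma SSplus_fin: "s \<in> SSplus \<Longrightarrow> finite (supp s)"
  unfolding SSplus_def SS_def by auto

lemma dd_eq:
  assumes s: "s \<in> SSplus"
  shows "dd s = card (fl (supp s))"
proof -
  let ?A = "supp s"
  let ?B = "fl ?A"
  let ?T = "{SC t | t. t \<in> SS \<and> (\<forall>i. t i \<in> {Neg, Zero, s i})}"
  have fA: "finite ?A" using SSplus_fin[OF s] .
  have fB: "finite ?B" using finite_fl[OF fA] .
  have AB: "?A \<subseteq> ?B" unfolding fl_def by auto
  have sv: "\<And>i. s i = Pos \<longleftrightarrow> i \<in> ?A" using s unfolding SSplus_def supp_def by auto
  have ub: "\<forall>y\<in>?T. y \<le> card ?B"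
  proof
    fix y assume "y \<in> ?T"
    then obtain t where t: "y = SC t" "\<forall>i. t i \<in> {Neg, Zero, s i}" by blast
    have "\<forall>i. t i = Pos \<longrightarrow> i \<in> ?B"
    proof (intro allI impI)
      fix i assume "t i = Pos"
      then have "s i = Pos" using t(2)[rule_format, of i] by auto
      then show "i \<in> ?B" using sv AB by auto
    qed
    then show "y \<le> card ?B" using SC_upper[OF fB PP_fl[OF fA]] t(1) by simp
  qed
  obtain t where t: "t \<in> SS" "\<forall>i. t i = Pos \<longrightarrow> i \<in> ?B \<and> odd (RL ?B i)" "card ?B \<le> SC t"
    using SC_lower[OF fB] by blast
  have "\<forall>i. t i \<in> {Neg, Zero, s i}"
  proof
    fix i show "t i \<in> {Neg, Zero, s i}"
    proof (cases "t i")
      case Pos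
      then have "i \<in> ?A" using t(2) fl_L1[OF fA] by blast
      then show ?thesis using Pos sv by (metis insert_iff)
    qed auto
  qed
  then have tT: "SC t \<in> ?T" using t(1) by blast
  then have eq: "SC t = card ?B" using ub t(3) by fastforce
  have fT: "finite ?T" by (rule finite_subset[of _ "{..card ?B}"]) (use ub in auto)
  show ?thesis unfolding dd_def
    by (rule Max_eqI[OF fT]) (use ub tT eq in auto)
qed



lemma sl_facts:
  assumes f: "finite X"
  defines "xs \<equiv> rev (sorted_list_of_set X)"
  shows "length xs = card X" "distinct xs" "set xs = X"
    "\<And>j k. j < k \<Longrightarrow> k < length xs \<Longrightarrow> xs ! k < xs ! j"
proof -
  show "length xs = card X" unfolding xs_def by simp
  show "distinct xs" unfolding xs_def by simp
  show "set xs = X" unfolding xs_def using f by simp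
  have "sorted_wrt (<) (sorted_list_of_set X)" by (rule strict_sorted_list_of_set)
  then have "sorted_wrt (\<lambda>x y. y < x) xs" unfolding xs_def by (simp add: sorted_wrt_rev)
  then show "\<And>j k. j < k \<Longrightarrow> k < length xs \<Longrightarrow> xs ! k < xs ! j"
    using sorted_wrt_nth_less by fastforce
qed

lemma K:
  assumes f: "finite X" and i: "i < card X"
  shows "v \<le> rev (sorted_list_of_set X) ! i \<longleftrightarrow> i < cnt X v"
proof -
  define xs where "xs = rev (sorted_list_of_set X)"
  note F = sl_facts[OF f, folded xs_def]
  have inj: "inj_on ((!) xs) {..<length xs}"
    using F(2) by (auto simp: inj_on_def nth_eq_iff_index_eq)
  show ?thesis unfolding xs_def[symmetric]
  proof
    assume v: "v \<le> xs ! i"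
    have sub: "(!) xs ` {..i} \<subseteq> {x\<in>X. v \<le> x}"
    proof
      fix y assume "y \<in> (!) xs ` {..i}"
      then obtain j where j: "j \<le> i" "y = xs ! j" by auto
      have "xs ! i \<le> xs ! j" using F(4)[of j i] j i F(1) by (cases "j = i") auto
      moreover have "y \<in> X" using j i F(1) F(3) nth_mem by (metis le_less_trans)
      ultimately show "y \<in> {x\<in>X. v \<le> x}" using v j by auto
    qed
    have "card ((!) xs ` {..i}) = Suc i"
    proof -
      have "{..i} \<subseteq> {..<length xs}" using i F(1) by auto
      then show ?thesis using card_image[OF inj_on_subset[OF inj, of "{..i}"]] by simp
    qed
    moreover have "card ((!) xs ` {..i}) \<le> cnt X v"
      unfolding cnt_def by (rule card_mono) (use f sub in auto)
    ultimately show "i < cnt X v" by simp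
  next
    assume c: "i < cnt X v"
    show "v \<le> xs ! i"
    proof (rule ccontr)
      assume "\<not> v \<le> xs ! i"
      then have lt: "xs ! i < v" by simp
      have sub: "{x\<in>X. v \<le> x} \<subseteq> (!) xs ` {..<i}"
      proof
        fix x assume x: "x \<in> {x\<in>X. v \<le> x}"
        then obtain j where j: "j < length xs" "x = xs ! j" using F(3) by (metis in_set_conv_nth mem_Collect_eq)
        have "j < i"
        proof (rule ccontr)
          assume "\<not> j < i"
          then have "xs ! j \<le> xs ! i" using F(4)[of i j] j by (cases "j = i") auto
          then show False using x j lt by auto
        qed
        then show "x \<in> (!) xs ` {..<i}" using j by auto
      qed
      have "cnt X v \<le> card ((!) xs ` {..<i})" unfolding cnt_def by (rule card_mono) (use sub in auto)
      also have "\<dots> \<le> i" using card_image_le[of "{..<i}" "(!) xs"] by simp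
      finally show False using c by simp
    qed
  qed
qed

lemma cnt_le_card: "finite X \<Longrightarrow> cnt X v \<le> card X"
  unfolding cnt_def by (rule card_mono) auto

lemma cnt_0: "cnt X 0 = card X" unfolding cnt_def by simp

lemma DOM:
  assumes fX: "finite X" and fY: "finite Y"
  shows "(length (rev (sorted_list_of_set X)) \<le> length (rev (sorted_list_of_set Y)) \<and>
          (\<forall>i<length (rev (sorted_list_of_set X)). rev (sorted_list_of_set X) ! i \<le> rev (sorted_list_of_set Y) ! i))
        \<longleftrightarrow> (\<forall>v. cnt X v \<le> cnt Y v)"
proof
  assume h: "length (rev (sorted_list_of_set X)) \<le> length (rev (sorted_list_of_set Y)) \<and>
          (\<forall>i<length (rev (sorted_list_of_set X)). rev (sorted_list_of_set X) ! i \<le> rev (sorted_list_of_set Y) ! i)"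
  show "\<forall>v. cnt X v \<le> cnt Y v"
  proof
    fix v
    show "cnt X v \<le> cnt Y v"
    proof (cases "cnt X v")
      case 0 then show ?thesis by simp
    next
      case (Suc i)
      then have i: "i < card X" using cnt_le_card[OF fX, of v] by simp
      then have "v \<le> rev (sorted_list_of_set X) ! i" using K[OF fX i] Suc by simp
      moreover have "i < card Y" using h i by simp
      ultimately have "v \<le> rev (sorted_list_of_set Y) ! i" using h i by (auto intro: order_trans)
      then have "i < cnt Y v" using K[OF fY \<open>i < card Y\<close>] by simp
      then show ?thesis using Suc by simp
    qed
  qed
next
  assume h: "\<forall>v. cnt X v \<le> cnt Y v"
  have "card X \<le> card Y" using h[rule_format, of 0] by (simp add: cnt_0)
  moreover have "\<forall>i<card X. rev (sorted_list_of_set X) ! i \<le> rev (sorted_list_of_set Y) ! i"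
  proof (intro allI impI)
    fix i assume i: "i < card X"
    let ?v = "rev (sorted_list_of_set X) ! i"
    have "i < cnt X ?v" using K[OF fX i, of ?v] by simp
    then have c: "i < cnt Y ?v" using h by (meson order_less_le_trans)
    then have "i < card Y" using cnt_le_card[OF fY, of ?v] by simp
    then show "?v \<le> rev (sorted_list_of_set Y) ! i" using K[OF fY] c by blast
  qed
  ultimately show "length (rev (sorted_list_of_set X)) \<le> length (rev (sorted_list_of_set Y)) \<and>
          (\<forall>i<length (rev (sorted_list_of_set X)). rev (sorted_list_of_set X) ! i \<le> rev (sorted_list_of_set Y) ! i)"
    by simp
qed

lemma circ_of: assumes f: "finite X" and P: "PP X" shows "of_supp X \<in> SSplus_circ"
proof -
  have s: "of_supp X \<in> SSplus" using of_supp_SSplus[OF f] .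
  have "dd (of_supp X) = card X" using dd_eq[OF s] PP_fl_id[OF P] supp_of_supp by simp
  then show ?thesis unfolding SSplus_circ_def using s supp_of_supp by simp
qed

lemma sfloor_of: "finite X \<Longrightarrow> sfloor (of_supp X) = of_supp (fl X)"
  unfolding sfloor_def supp_of_supp using floor_eq by simp

lemma sceil_of: "finite X \<Longrightarrow> sceil (of_supp X) = of_supp (ce X)"
  unfolding sceil_def supp_of_supp using ceil_eq by simp

lemma of_supp_inj: "of_supp X = of_supp Y \<Longrightarrow> X = Y"
  by (metis supp_of_supp)

lemma prec_of:
  assumes fX: "finite X" and fY: "finite Y"
  shows "prec (of_supp X) (of_supp Y) \<longleftrightarrow> X = Y \<or> (\<forall>v. cnt (ce X) v \<le> cnt (fl Y) v)"
proof -
  have c1: "of_supp (ce X) \<in> SSplus_circ" using circ_of[OF finite_ce[OF fX] PP_ce[OF fX]] .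
  have c2: "of_supp (fl Y) \<in> SSplus_circ" using circ_of[OF finite_fl[OF fY] PP_fl[OF fY]] .
  have "prec0 (of_supp (ce X)) (of_supp (fl Y)) \<longleftrightarrow> (\<forall>v. cnt (ce X) v \<le> cnt (fl Y) v)"
    unfolding prec0_def dsupp_def supp_of_supp
    using c1 c2 DOM[OF finite_ce[OF fX] finite_fl[OF fY]] by simp
  then show ?thesis unfolding prec_def using of_supp_SSplus[OF fX] of_supp_SSplus[OF fY]
      sfloor_of[OF fY] sceil_of[OF fX] of_supp_inj by auto
qed

theorem mainTheorem10:
  assumes "s \<in> SSplus" and "s' \<in> SSplus"
  shows "prec (sfloor s) s \<and> prec s (sceil s) \<and>
         (prec s s' \<longrightarrow> prec (sfloor s) (sfloor s') \<and> prec (sceil s) (sceil s') \<and> dd s \<le> dd s')"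
proof -
  define A where "A = supp s"
  define B where "B = supp s'"
  have fA: "finite A" using SSplus_fin assms A_def by blast
  have fB: "finite B" using SSplus_fin assms B_def by blast
  have s: "s = of_supp A" using SSplus_of_supp assms A_def by blast
  have s': "s' = of_supp B" using SSplus_of_supp assms B_def by blast
  have flA: "finite (fl A)" "finite (ce A)" using finite_fl[OF fA] finite_ce[OF fA] by auto
  have flB: "finite (fl B)" "finite (ce B)" using finite_fl[OF fB] finite_ce[OF fB] by auto
  have id1: "ce (fl A) = fl A" "fl (fl B) = fl B" "ce (ce A) = ce A" "fl (ce B) = ce B"
    "fl (ce A) = ce A" "ce (fl A) = fl A"
    using PP_ce_id[OF PP_fl[OF fA]] PP_fl_id[OF PP_fl[OF fB]] PP_ce_id[OF PP_ce[OF fA]]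
      PP_fl_id[OF PP_ce[OF fB]] PP_fl_id[OF PP_ce[OF fA]] by simp_all
  have m1: "\<And>v. cnt (fl A) v \<le> cnt (ce A) v" using cnt_fl_ce[OF fA] .
  have m2: "\<And>v. cnt (fl B) v \<le> cnt (ce B) v" using cnt_fl_ce[OF fB] .
  have P1: "prec (sfloor s) s"
    unfolding s sfloor_of[OF fA] using prec_of[OF flA(1) fA] id1 by simp
  have P2: "prec s (sceil s)"
    unfolding s sceil_of[OF fA] using prec_of[OF fA flA(2)] id1 by simp
  have P3: "prec (sfloor s) (sfloor s') \<and> prec (sceil s) (sceil s') \<and> dd s \<le> dd s'"
    if h: "prec s s'"
  proof (cases "A = B")
    case True
    then have "s = s'" using s s' by simp
    have "prec (sfloor s) (sfloor s')"
      unfolding s s' sfloor_of[OF fA] sfloor_of[OF fB] prec_of[OF flA(1) flB(1)] using True by simp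
    moreover have "prec (sceil s) (sceil s')"
      unfolding s s' sceil_of[OF fA] sceil_of[OF fB] prec_of[OF flA(2) flB(2)] using True by simp
    ultimately show ?thesis using \<open>s = s'\<close> by simp
  next
    case False
    then have H: "\<And>v. cnt (ce A) v \<le> cnt (fl B) v" using h prec_of[OF fA fB] s s' by auto
    have "prec (sfloor s) (sfloor s')"
      unfolding s s' sfloor_of[OF fA] sfloor_of[OF fB] prec_of[OF flA(1) flB(1)] id1
      using m1 H order_trans by blast
    moreover have "prec (sceil s) (sceil s')"
      unfolding s s' sceil_of[OF fA] sceil_of[OF fB] prec_of[OF flA(2) flB(2)] id1
      using m2 H order_trans by blast
    moreover have "dd s \<le> dd s'"
    proof -
      have "dd s = card (fl A)" using dd_eq assms A_def by blast
      also have "\<dots> = card (ce A)" using card_fl[OF fA] card_ce[OF fA] by simp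
      also have "\<dots> = cnt (ce A) 0" by (simp add: cnt_0)
      also have "\<dots> \<le> cnt (fl B) 0" using H .
      also have "\<dots> = dd s'" using dd_eq assms B_def by (simp add: cnt_0)
      finally show ?thesis .
    qed
    ultimately show ?thesis by blast
  qed
  show ?thesis using P1 P2 P3 by blast
qed

end
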